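(* Let $n\ge2$, $h\ge1$, $0\le l\le (n-1)h$ be integers, $N=nh$, and let $\mathcal{F}=\{p_1,\dots,p_N\}$. For $i=1,\dots,n$ let $B_i=\{p_{(i-1)h+1},\dots,p_{ih}\}$, let $R_i$ be a uniformly random $l$-element subset of $\mathcal{F}\setminus B_i$, the $R_i$ chosen independently, and let $G_i=B_i\cup R_i$, $g=h+l$. Let $\pi=\frac{l}{(n-1)h}$ and $\bar\pi=1-\pi$. Then for any $I\subset\{1,\dots,n\}$ with $|I|=s$ and any $j\in\{1,\dots,n\}\setminus I$, \[ \Omega(s):=E\Bigl[\Bigl|\Bigl(\bigcup_{i\in I}G_i\Bigr)\cap G_j\Bigr|\Bigr]=g\bigl[1-\bar\pi^s\bigr]+sh\,\pi\,\bar\pi^s . \] Moreover, when $n\to\infty$ with $l/h\to\alpha$ and $s/n\to\beta$, writing $\omega(\beta)=\Omega(s)$, one has $\omega(\beta)\to h\bigl[(1+\alpha)(1-e^{-\alpha\beta})+\alpha\beta e^{-\alpha\beta}\bigr]$.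
   Context: This describes the "random annex code": $B_i$ are base generations, $R_i$ random annexes, $G_i$ extended generations. *)

theory Defs
  imports "HOL-Probability.Probability"
begin

text \<open>Random annex code. Points p_1..p_N are identified with the naturals 1..N.\<close>

definition ground :: "nat \<Rightarrow> nat \<Rightarrow> nat set" where
  "ground n h = {1..n*h}"

definition base :: "nat \<Rightarrow> nat \<Rightarrow> nat set" where
  "base h i = {(i - 1) * h + 1 .. i * h}"

definition annex_pmf :: "nat \<Rightarrow> nat \<Rightarrow> nat \<Rightarrow> nat \<Rightarrow> nat set pmf" where
  "annex_pmf n h l i = pmf_of_set {S. S \<subseteq> ground n h - base h i \<and> card S = l}"

definition annexes_pmf :: "nat \<Rightarrow> nat \<Rightarrow> nat \<Rightarrow> (nat \<Rightarrow> nat set) pmf" where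
  "annexes_pmf n h l = Pi_pmf {1..n} {} (\<lambda>i. annex_pmf n h l i)"

definition gen :: "nat \<Rightarrow> (nat \<Rightarrow> nat set) \<Rightarrow> nat \<Rightarrow> nat set" where
  "gen h R i = base h i \<union> R i"

definition Omega :: "nat \<Rightarrow> nat \<Rightarrow> nat \<Rightarrow> nat set \<Rightarrow> nat \<Rightarrow> real" where
  "Omega n h l I j = measure_pmf.expectation (annexes_pmf n h l)
     (\<lambda>R. real (card ((\<Union>i\<in>I. gen h R i) \<inter> gen h R j)))"

end

theory Submission
  imports Defs
begin


lemma base_Suc: "base h (Suc k) = {k*h+1 .. k*h+h}"
  by (simp add: base_def algebra_simps)

lemma card_base: "k \<ge> 1 \<Longrightarrow> card (base h k) = h"
  by (cases k) (auto simp: base_Suc)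

lemma finite_base[simp]: "finite (base h k)"
  by (simp add: base_def)

lemma base_disj:
  assumes "k \<ge> 1" "x \<ge> 1" "p \<in> base h k" "p \<in> base h x"
  shows "x = k"
proof -
  obtain k' where k: "k = Suc k'" using assms(1) by (cases k) auto
  obtain x' where x: "x = Suc x'" using assms(2) by (cases x) auto
  have pk: "k'*h+1 \<le> p" "p \<le> k'*h+h" using assms(3) by (auto simp: k base_Suc)
  have px: "x'*h+1 \<le> p" "p \<le> x'*h+h" using assms(4) by (auto simp: x base_Suc)
  have "\<not> k' < x'"
  proof
    assume "k' < x'"
    hence "Suc k' * h \<le> x' * h" by (intro mult_le_mono1) auto
    thus False using pk px by simp
  qed
  moreover have "\<not> x' < k'"
  proof
    assume "x' < k'"
    hence "Suc x' * h \<le> k' * h" by (intro mult_le_mono1) auto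
    thus False using pk px by simp
  qed
  ultimately show ?thesis using k x by simp
qed

lemma base_sub_ground: "k \<in> {1..n} \<Longrightarrow> base h k \<subseteq> ground n h"
proof -
  assume k: "k \<in> {1..n}"
  then obtain k' where kk: "k = Suc k'" by (cases k) auto
  have "Suc k' * h \<le> n * h" using k kk by (intro mult_le_mono1) auto
  thus ?thesis by (auto simp: kk base_Suc ground_def)
qed

lemma ground_Union:
  assumes "h \<ge> 1"
  shows "ground n h = (\<Union>k\<in>{1..n}. base h k)"
proof
  show "(\<Union>k\<in>{1..n}. base h k) \<subseteq> ground n h" using base_sub_ground by blast
  show "ground n h \<subseteq> (\<Union>k\<in>{1..n}. base h k)"
  proof
    fix p assume p: "p \<in> ground n h"
    define k' where "k' = (p - 1) div h"
    have p1: "1 \<le> p" "p \<le> n*h" using p by (auto simp: ground_def)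
    have a: "k' * h \<le> p - 1" unfolding k'_def by (rule div_times_less_eq_dividend)
    have b: "p - 1 = k' * h + (p - 1) mod h" unfolding k'_def by simp
    have c: "(p - 1) mod h < h" using assms by simp
    have d: "k' < n"
    proof (rule ccontr)
      assume "\<not> k' < n"
      hence "n * h \<le> k' * h" by (intro mult_le_mono1) auto
      thus False using a p1 by linarith
    qed
    have "p \<in> base h (Suc k')" unfolding base_Suc using a b c p1 by auto
    thus "p \<in> (\<Union>k\<in>{1..n}. base h k)" using d by force
  qed
qed

lemma count_subsets_with:
  assumes "finite D" "p \<in> D" "card D = m" "l \<le> m" "m \<ge> 1"
  shows "real (card {S. (S \<subseteq> D \<and> card S = l) \<and> p \<in> S}) = real l / real m * real (card {S. S \<subseteq> D \<and> card S = l})"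
proof (cases l)
  case 0
  have "{S. (S \<subseteq> D \<and> card S = l) \<and> p \<in> S} = {}"
    using assms(1) 0 by (auto dest: finite_subset)
  hence "card {S. (S \<subseteq> D \<and> card S = l) \<and> p \<in> S} = 0" by (simp only: card.empty)
  thus ?thesis using 0 by simp
next
  case (Suc l')
  obtain m' where m: "m = Suc m'" using assms(5) by (cases m) auto
  have eq: "{S. (S \<subseteq> D \<and> card S = l) \<and> p \<in> S} = insert p ` {T. T \<subseteq> D - {p} \<and> card T = l'}"
  proof (intro equalityI subsetI)
    fix S assume S: "S \<in> {S. (S \<subseteq> D \<and> card S = l) \<and> p \<in> S}"
    hence fS: "finite S" using assms(1) finite_subset by blast
    have "S = insert p (S - {p})" using S by auto
    moreover have "card (S - {p}) = l'" using S fS Suc by auto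
    ultimately show "S \<in> insert p ` {T. T \<subseteq> D - {p} \<and> card T = l'}" using S by blast
  next
    fix S assume "S \<in> insert p ` {T. T \<subseteq> D - {p} \<and> card T = l'}"
    then obtain T where T: "T \<subseteq> D - {p}" "card T = l'" "S = insert p T" by blast
    have "finite T" using T(1) assms(1) finite_subset by blast
    moreover have "p \<notin> T" using T(1) by blast
    ultimately show "S \<in> {S. (S \<subseteq> D \<and> card S = l) \<and> p \<in> S}" using T Suc assms(2) by auto
  qed
  have inj: "inj_on (insert p) {T. T \<subseteq> D - {p} \<and> card T = l'}"
    by (rule inj_onI) (metis Diff_insert_absorb Diff_subset subset_Diff_insert mem_Collect_eq)
  have c1: "card {S. (S \<subseteq> D \<and> card S = l) \<and> p \<in> S} = m' choose l'"
    unfolding eq using assms m by (simp add: card_image[OF inj] n_subsets)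
  have c2: "card {S. S \<subseteq> D \<and> card S = l} = m choose l"
    using assms by (simp add: n_subsets)
  have key: "real (Suc m') * real (m' choose l') = real (Suc m' choose Suc l') * real (Suc l')"
    using Suc_times_binomial_eq[of m' l'] by (metis of_nat_mult)
  show ?thesis unfolding c1 c2 using key Suc m by (simp add: field_simps)
qed

lemma card_D:
  assumes "i \<in> {1..n}"
  shows "card (ground n h - base h i) = (n - 1) * h"
proof -
  have "card (ground n h - base h i) = n * h - h"
    using base_sub_ground[OF assms] card_base[of i h] assms
    by (simp add: card_Diff_subset ground_def)
  thus ?thesis by (simp add: diff_mult_distrib)
qed

lemma annex_facts:
  assumes "i \<in> {1..n}" "l \<le> (n - 1) * h"
  defines "X \<equiv> {S. S \<subseteq> ground n h - base h i \<and> card S = l}"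
  shows "finite X" "X \<noteq> {}" "card X = ((n-1)*h) choose l" "annex_pmf n h l i = pmf_of_set X"
proof -
  have fD: "finite (ground n h - base h i)" by (simp add: ground_def)
  show "finite X" unfolding X_def using fD by (auto intro: finite_subset)
  show c: "card X = ((n-1)*h) choose l" unfolding X_def using n_subsets[OF fD] card_D[OF assms(1)] by simp
  hence "card X \<noteq> 0" using assms(2) by simp
  thus "X \<noteq> {}" by auto
  show "annex_pmf n h l i = pmf_of_set X" by (simp add: annex_pmf_def X_def)
qed

lemma set_annex:
  assumes "i \<in> {1..n}" "l \<le> (n - 1) * h"
  shows "set_pmf (annex_pmf n h l i) = {S. S \<subseteq> ground n h - base h i \<and> card S = l}"
  using annex_facts[OF assms] by simp

lemma E_in:
  assumes "i \<in> {1..n}" "l \<le> (n - 1) * h" "h \<ge> 1" "n \<ge> 2" "p \<in> ground n h"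
  shows "measure_pmf.expectation (annex_pmf n h l i) (\<lambda>S. of_bool (p \<in> base h i \<union> S) :: real)
     = (if p \<in> base h i then 1 else real l / (real (n - 1) * real h))"
proof -
  define X where "X = {S. S \<subseteq> ground n h - base h i \<and> card S = l}"
  note F = annex_facts[OF assms(1,2), folded X_def]
  have E: "measure_pmf.expectation (annex_pmf n h l i) (\<lambda>S. of_bool (p \<in> base h i \<union> S) :: real)
      = (\<Sum>S\<in>X. of_bool (p \<in> base h i \<union> S)) / real (card X)"
    using F by (simp add: integral_pmf_of_set)
  show ?thesis
  proof (cases "p \<in> base h i")
    case True
    thus ?thesis unfolding E using F assms(2) by simp
  next
    case False
    have pD: "p \<in> ground n h - base h i" using False assms by simp
    have m1: "(n - 1) * h \<ge> 1" using assms by simp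
    have "(\<Sum>S\<in>X. of_bool (p \<in> base h i \<union> S) :: real) = real (card (X \<inter> {S. p \<in> S}))"
      using False F by (simp add: sum_of_bool_eq)
    also have "X \<inter> {S. p \<in> S} = {S. (S \<subseteq> ground n h - base h i \<and> card S = l) \<and> p \<in> S}"
      unfolding X_def by auto
    also have "real (card \<dots>) = real l / real ((n-1)*h) * real (card X)"
      unfolding X_def
      by (rule count_subsets_with) (use pD m1 assms card_D[OF assms(1)] in \<open>auto simp: ground_def\<close>)
    finally show ?thesis unfolding E using F False assms(2) by (simp add: card_gt_0_iff)
  qed
qed

lemma E_out:
  assumes "i \<in> {1..n}" "l \<le> (n - 1) * h" "h \<ge> 1" "n \<ge> 2" "p \<in> ground n h"
  shows "measure_pmf.expectation (annex_pmf n h l i) (\<lambda>S. of_bool (p \<notin> base h i \<union> S) :: real)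
     = 1 - (if p \<in> base h i then 1 else real l / (real (n - 1) * real h))"
proof -
  define X where "X = {S. S \<subseteq> ground n h - base h i \<and> card S = l}"
  note F = annex_facts[OF assms(1,2), folded X_def]
  have "(\<lambda>S. of_bool (p \<notin> base h i \<union> S) :: real) = (\<lambda>S. 1 - of_bool (p \<in> base h i \<union> S))"
    by auto
  hence "measure_pmf.expectation (annex_pmf n h l i) (\<lambda>S. of_bool (p \<notin> base h i \<union> S) :: real)
     = measure_pmf.expectation (annex_pmf n h l i) (\<lambda>S. 1 - of_bool (p \<in> base h i \<union> S) :: real)"
    by simp
  also have "\<dots> = 1 - measure_pmf.expectation (annex_pmf n h l i) (\<lambda>S. of_bool (p \<in> base h i \<union> S) :: real)"
    using F assms(2) by (simp add: integral_pmf_of_set sum_subtractf diff_divide_distrib card_gt_0_iff)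
  finally show ?thesis using E_in[OF assms] by simp
qed



lemma prod_of_bool: "finite I \<Longrightarrow> (\<Prod>i\<in>I. (of_bool (Q i) :: real)) = of_bool (\<forall>i\<in>I. Q i)"
  by (induction I rule: finite_induct) auto

lemma prod_helper:
  assumes "finite A" "j \<in> A" "I \<subseteq> A" "j \<notin> I"
  shows "(\<Prod>x\<in>A. (if x = j then a else if x \<in> I then b x else 1 :: real)) = a * (\<Prod>x\<in>I. b x)"
proof -
  let ?g = "\<lambda>x. (if x = j then a else if x \<in> I then b x else 1 :: real)"
  have "(\<Prod>x\<in>A. ?g x) = (\<Prod>x\<in>insert j I. ?g x)"
    by (rule prod.mono_neutral_right) (use assms in \<open>auto intro: finite_subset\<close>)
  also have "\<dots> = a * (\<Prod>x\<in>I. ?g x)"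
    using assms by (subst prod.insert) (auto intro: finite_subset)
  also have "(\<Prod>x\<in>I. ?g x) = (\<Prod>x\<in>I. b x)"
    by (rule prod.cong) (use assms in auto)
  finally show ?thesis .
qed

lemma E_one: "measure_pmf.expectation M (\<lambda>_. 1 :: real) = 1"
  by simp

lemma point_expectation:
  assumes n2: "n \<ge> 2" and h1: "h \<ge> 1" and lm: "l \<le> (n - 1) * h"
    and IA: "I \<subseteq> {1..n}" and jA: "j \<in> {1..n} - I" and pF: "p \<in> ground n h"
  defines "a \<equiv> \<lambda>x. (if p \<in> base h x then 1 else real l / (real (n - 1) * real h))"
  shows "measure_pmf.expectation (annexes_pmf n h l)
           (\<lambda>R. of_bool (p \<in> (\<Union>i\<in>I. gen h R i) \<inter> gen h R j) :: real)
         = a j - a j * (\<Prod>i\<in>I. (1 - a i))"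
proof -
  define A :: "nat set" where "A = {1..n}"
  have fA: "finite A" by (simp add: A_def)
  have fI: "finite I" using IA finite_subset by blast
  have jA': "j \<in> A" "j \<notin> I" "I \<subseteq> A" using jA IA by (auto simp: A_def)
  have fin_annex: "finite (set_pmf (annex_pmf n h l x))" if "x \<in> A" for x
    using annex_facts(1)[OF _ lm, of x] set_annex[OF _ lm, of x] that by (simp add: A_def)
  have int_annex: "integrable (measure_pmf (annex_pmf n h l x)) f" if "x \<in> A" for x and f :: "nat set \<Rightarrow> real"
    using fin_annex[OF that] by (rule integrable_measure_pmf_finite)
  define f1 where "f1 = (\<lambda>x S. if x = j then of_bool (p \<in> base h x \<union> S) else (1::real))"
  define f2 where "f2 = (\<lambda>x S. if x = j then of_bool (p \<in> base h x \<union> S)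
                         else if x \<in> I then of_bool (p \<notin> base h x \<union> S) else (1::real))"
  have P: "annexes_pmf n h l = Pi_pmf A {} (\<lambda>i. annex_pmf n h l i)"
    by (simp add: annexes_pmf_def A_def)
  have finP: "finite (set_pmf (annexes_pmf n h l))"
    unfolding P using fA fin_annex by (auto simp: set_Pi_pmf)
  have eq: "(of_bool (p \<in> (\<Union>i\<in>I. gen h R i) \<inter> gen h R j) :: real)
        = (\<Prod>x\<in>A. f1 x (R x)) - (\<Prod>x\<in>A. f2 x (R x))" for R
  proof -
    have "(\<Prod>x\<in>A. f1 x (R x)) = (\<Prod>x\<in>A. if x = j then of_bool (p \<in> gen h R j) else if x \<in> {} then 1 else 1)"
      by (rule prod.cong) (auto simp: f1_def gen_def)
    also have "\<dots> = of_bool (p \<in> gen h R j) * (\<Prod>x\<in>{}. 1)"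
      using prod_helper[of A j "{}" "of_bool (p \<in> gen h R j)" "\<lambda>_. 1"] fA jA' by simp
    finally have 1: "(\<Prod>x\<in>A. f1 x (R x)) = of_bool (p \<in> gen h R j)" by simp
    have "(\<Prod>x\<in>A. f2 x (R x)) = (\<Prod>x\<in>A. if x = j then of_bool (p \<in> gen h R j) else if x \<in> I then of_bool (p \<notin> gen h R x) else 1)"
      by (rule prod.cong) (auto simp: f2_def gen_def)
    also have "\<dots> = of_bool (p \<in> gen h R j) * (\<Prod>i\<in>I. of_bool (p \<notin> gen h R i))"
      by (rule prod_helper[OF fA jA'(1) jA'(3) jA'(2)])
    finally have 2: "(\<Prod>x\<in>A. f2 x (R x)) = of_bool (p \<in> gen h R j) * (\<Prod>i\<in>I. of_bool (p \<notin> gen h R i))" .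
    show ?thesis unfolding 1 2 using fI by (auto simp: prod_of_bool)
  qed
  have E1: "measure_pmf.expectation (annexes_pmf n h l) (\<lambda>R. \<Prod>x\<in>A. f1 x (R x)) = a j"
  proof -
    have "measure_pmf.expectation (annexes_pmf n h l) (\<lambda>R. \<Prod>x\<in>A. f1 x (R x))
        = (\<Prod>x\<in>A. measure_pmf.expectation (annex_pmf n h l x) (f1 x))"
      unfolding P by (rule expectation_prod_Pi_pmf[OF fA int_annex]) (auto simp: f1_def)
    also have "\<dots> = (\<Prod>x\<in>A. (if x = j then a j else if x \<in> {} then 0 else 1))"
      by (rule prod.cong) (use E_in[OF _ lm h1 n2 pF] in \<open>auto simp: f1_def a_def A_def\<close>)
    also have "\<dots> = a j * (\<Prod>x\<in>{}. 0)"
      using prod_helper[of A j "{}" "a j" "\<lambda>_. 0"] fA jA' by simp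
    finally show ?thesis by simp
  qed
  have E2: "measure_pmf.expectation (annexes_pmf n h l) (\<lambda>R. \<Prod>x\<in>A. f2 x (R x)) = a j * (\<Prod>i\<in>I. (1 - a i))"
  proof -
    have "measure_pmf.expectation (annexes_pmf n h l) (\<lambda>R. \<Prod>x\<in>A. f2 x (R x))
        = (\<Prod>x\<in>A. measure_pmf.expectation (annex_pmf n h l x) (f2 x))"
      unfolding P by (rule expectation_prod_Pi_pmf[OF fA int_annex]) (auto simp: f2_def)
    also have "\<dots> = (\<Prod>x\<in>A. (if x = j then a j else if x \<in> I then 1 - a x else 1))"
      by (rule prod.cong) (use E_in[OF _ lm h1 n2 pF] E_out[OF _ lm h1 n2 pF] jA' in \<open>auto simp: f2_def a_def A_def\<close>)
    also have "\<dots> = a j * (\<Prod>i\<in>I. (1 - a i))" using prod_helper[OF fA jA'(1) jA'(3) jA'(2)] by simp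
    finally show ?thesis .
  qed
  have "measure_pmf.expectation (annexes_pmf n h l)
           (\<lambda>R. of_bool (p \<in> (\<Union>i\<in>I. gen h R i) \<inter> gen h R j) :: real)
     = measure_pmf.expectation (annexes_pmf n h l) (\<lambda>R. (\<Prod>x\<in>A. f1 x (R x)) - (\<Prod>x\<in>A. f2 x (R x)))"
    by (simp only: eq)
  also have "\<dots> = a j - a j * (\<Prod>i\<in>I. (1 - a i))"
    using finP by (subst Bochner_Integration.integral_diff) (auto intro: integrable_measure_pmf_finite simp: E1 E2)
  finally show ?thesis .
qed



lemma sum_three:
  assumes "finite A" "j \<in> A" "I \<subseteq> A" "j \<notin> I"
  shows "(\<Sum>k\<in>A. (if k = j then X else if k \<in> I then Y else Z :: real))
       = X + real (card I) * Y + (real (card A) - 1 - real (card I)) * Z"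
proof -
  let ?g = "\<lambda>k. (if k = j then X else if k \<in> I then Y else Z :: real)"
  have fI: "finite I" using assms finite_subset by blast
  have Aeq: "A = insert j (I \<union> (A - insert j I))" using assms by auto
  have "(\<Sum>k\<in>A. ?g k) = ?g j + (\<Sum>k\<in>I \<union> (A - insert j I). ?g k)"
    using assms fI by (subst Aeq, subst sum.insert) auto
  also have "(\<Sum>k\<in>I \<union> (A - insert j I). ?g k) = (\<Sum>k\<in>I. ?g k) + (\<Sum>k\<in>A - insert j I. ?g k)"
    using assms fI by (intro sum.union_disjoint) auto
  also have "(\<Sum>k\<in>I. ?g k) = (\<Sum>k\<in>I. Y)" by (rule sum.cong) (use assms in auto)
  also have "(\<Sum>k\<in>A - insert j I. ?g k) = (\<Sum>k\<in>A - insert j I. Z)" by (rule sum.cong) auto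
  also have "card (A - insert j I) = card A - Suc (card I)"
    using assms fI by (subst card_Diff_subset) auto
  moreover have "card A \<ge> Suc (card I)"
  proof -
    have "card (insert j I) \<le> card A" using assms by (intro card_mono) auto
    thus ?thesis using assms fI by simp
  qed
  ultimately show ?thesis by (simp add: of_nat_diff)
qed

lemma omega_formula:
  assumes n2: "n \<ge> 2" and h1: "h \<ge> 1" and lm: "l \<le> (n - 1) * h"
    and IA: "I \<subseteq> {1..n}" and jA: "j \<in> {1..n} - I"
  defines "\<pi> \<equiv> real l / (real (n - 1) * real h)"
  shows "Omega n h l I j = real (h + l) * (1 - (1 - \<pi>) ^ card I) + real (card I) * real h * \<pi> * (1 - \<pi>) ^ card I"
proof -
  define A :: "nat set" where "A = {1..n}"
  define F where "F = ground n h"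
  define s where "s = card I"
  define q where "q = (1 - \<pi>) ^ s"
  define a where "a = (\<lambda>p x. (if p \<in> base h x then 1 else \<pi>))"
  have fA: "finite A" by (simp add: A_def)
  have fF: "finite F" by (simp add: F_def ground_def)
  have fI: "finite I" using IA finite_subset by blast
  have jA': "j \<in> A" "j \<notin> I" "I \<subseteq> A" using jA IA by (auto simp: A_def)
  have P: "annexes_pmf n h l = Pi_pmf A {} (\<lambda>i. annex_pmf n h l i)"
    by (simp add: annexes_pmf_def A_def)
  have fin_annex: "finite (set_pmf (annex_pmf n h l x))" if "x \<in> A" for x
    using annex_facts(1)[OF _ lm, of x] set_annex[OF _ lm, of x] that by (simp add: A_def)
  have finP: "finite (set_pmf (annexes_pmf n h l))"
    unfolding P using fA fin_annex by (auto simp: set_Pi_pmf)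
  have cardeq: "real (card ((\<Union>i\<in>I. gen h R i) \<inter> gen h R j))
      = (\<Sum>p\<in>F. of_bool (p \<in> (\<Union>i\<in>I. gen h R i) \<inter> gen h R j))"
    if R: "R \<in> set_pmf (annexes_pmf n h l)" for R
  proof -
    have "R j \<in> set_pmf (annex_pmf n h l j)"
      using R jA' fA unfolding P by (auto simp: set_Pi_pmf PiE_dflt_def)
    hence "R j \<subseteq> F" using set_annex[OF _ lm, of j] jA by (auto simp: F_def)
    moreover have "base h j \<subseteq> F" using base_sub_ground jA by (auto simp: F_def)
    ultimately have "gen h R j \<subseteq> F" by (auto simp: gen_def)
    hence "F \<inter> {p. p \<in> (\<Union>i\<in>I. gen h R i) \<inter> gen h R j} = (\<Union>i\<in>I. gen h R i) \<inter> gen h R j" by auto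
    thus ?thesis using fF by (simp add: sum_of_bool_eq)
  qed
  have "Omega n h l I j = measure_pmf.expectation (annexes_pmf n h l)
      (\<lambda>R. \<Sum>p\<in>F. of_bool (p \<in> (\<Union>i\<in>I. gen h R i) \<inter> gen h R j) :: real)"
    unfolding Omega_def by (intro integral_cong_AE) (auto intro!: AE_pmfI simp: cardeq)
  also have "\<dots> = (\<Sum>p\<in>F. measure_pmf.expectation (annexes_pmf n h l)
      (\<lambda>R. of_bool (p \<in> (\<Union>i\<in>I. gen h R i) \<inter> gen h R j) :: real))"
    by (intro Bochner_Integration.integral_sum integrable_measure_pmf_finite finP)
  also have "\<dots> = (\<Sum>p\<in>F. a p j - a p j * (\<Prod>i\<in>I. (1 - a p i)))"
  proof (rule sum.cong[OF refl])
    fix p assume "p \<in> F"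
    hence pF: "p \<in> ground n h" by (simp add: F_def)
    show "measure_pmf.expectation (annexes_pmf n h l)
      (\<lambda>R. of_bool (p \<in> (\<Union>i\<in>I. gen h R i) \<inter> gen h R j) :: real) = a p j - a p j * (\<Prod>i\<in>I. (1 - a p i))"
      unfolding point_expectation[OF n2 h1 lm IA jA pF] a_def \<pi>_def ..
  qed
  also have "\<dots> = (\<Sum>k\<in>A. \<Sum>p\<in>base h k. a p j - a p j * (\<Prod>i\<in>I. (1 - a p i)))"
    unfolding F_def ground_Union[OF h1] A_def
    by (rule sum.UNION_disjoint) (auto, metis base_disj One_nat_def)
  also have "\<dots> = (\<Sum>k\<in>A. real h * (if k = j then 1 - q else if k \<in> I then \<pi> else \<pi> - \<pi> * q))"
  proof (rule sum.cong[OF refl])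
    fix k assume kA: "k \<in> A"
    have trm: "a p j - a p j * (\<Prod>i\<in>I. (1 - a p i)) = (if k = j then 1 - q else if k \<in> I then \<pi> else \<pi> - \<pi> * q)"
      if pk: "p \<in> base h k" for p
    proof -
      have ax: "a p x = (if x = k then 1 else \<pi>)" if xA: "x \<in> A" for x
      proof (cases "x = k")
        case True thus ?thesis using pk by (simp add: a_def)
      next
        case False
        have "k \<ge> 1" "x \<ge> 1" using kA xA by (auto simp: A_def)
        hence "p \<notin> base h x" using base_disj[where k=k and x=x and h=h and p=p] pk False by blast
        thus ?thesis using False by (simp add: a_def)
      qed
      have pr: "(\<Prod>i\<in>I. (1 - a p i)) = (if k \<in> I then 0 else q)"
      proof (cases "k \<in> I")
        case True
        have "1 - a p k = 0" using ax[OF kA] by simp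
        hence ex: "\<exists>i\<in>I. 1 - a p i = 0" using True by (intro bexI[where x=k])
        have "(\<Prod>i\<in>I. (1 - a p i)) = 0" by (rule prod_zero[OF fI ex])
        thus ?thesis using True by simp
      next
        case False
        have "(\<Prod>i\<in>I. (1 - a p i)) = (\<Prod>i\<in>I. (1 - \<pi>))"
          by (rule prod.cong) (use False ax jA' in auto)
        thus ?thesis using False by (simp add: q_def s_def)
      qed
      show ?thesis unfolding pr ax[OF jA'(1)] by (cases "k = j") (use jA' in auto)
    qed
    have "(\<Sum>p\<in>base h k. a p j - a p j * (\<Prod>i\<in>I. (1 - a p i)))
        = (\<Sum>p\<in>base h k. (if k = j then 1 - q else if k \<in> I then \<pi> else \<pi> - \<pi> * q))"
      by (rule sum.cong) (use trm in auto)
    also have "\<dots> = real h * (if k = j then 1 - q else if k \<in> I then \<pi> else \<pi> - \<pi> * q)"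
      using card_base[of k h] kA by (simp add: A_def)
    finally show "(\<Sum>p\<in>base h k. a p j - a p j * (\<Prod>i\<in>I. (1 - a p i))) = real h * (if k = j then 1 - q else if k \<in> I then \<pi> else \<pi> - \<pi> * q)" .
  qed
  also have "\<dots> = real h * (\<Sum>k\<in>A. (if k = j then 1 - q else if k \<in> I then \<pi> else \<pi> - \<pi> * q))"
    by (simp add: sum_distrib_left)
  also have "\<dots> = real h * ((1 - q) + real s * \<pi> + (real n - 1 - real s) * (\<pi> - \<pi> * q))"
    using sum_three[OF fA jA'(1) jA'(3) jA'(2)] by (simp add: A_def s_def)
  also have "\<dots> = real (h + l) * (1 - q) + real s * real h * \<pi> * q"
  proof -
    have key: "(real n - 1) * real h * \<pi> = real l"
      using n2 h1 by (simp add: \<pi>_def of_nat_diff)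
    have "real h * ((1 - q) + real s * \<pi> + (real n - 1 - real s) * (\<pi> - \<pi> * q))
       = real h * (1 - q) + (real n - 1) * real h * \<pi> * (1 - q) + real s * real h * \<pi> * q"
      by (simp add: algebra_simps)
    also have "\<dots> = real h * (1 - q) + real l * (1 - q) + real s * real h * \<pi> * q"
      unfolding key ..
    finally show ?thesis by (simp add: algebra_simps)
  qed
  finally show ?thesis by (simp add: q_def s_def)
qed



lemma limit_part:
  fixes n h l :: "nat \<Rightarrow> nat" and I :: "nat \<Rightarrow> nat set" and j :: "nat \<Rightarrow> nat"
  assumes H: "\<forall>k. n k \<ge> 2 \<and> h k \<ge> 1 \<and> l k \<le> (n k - 1) * h k \<and>
           I k \<subseteq> {1..n k} \<and> j k \<in> {1..n k} - I k"
    and nlim: "filterlim n at_top sequentially"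
    and xl: "(\<lambda>k. real (l k) / real (h k)) \<longlonglongrightarrow> \<alpha>"
    and bl: "(\<lambda>k. real (card (I k)) / real (n k)) \<longlonglongrightarrow> \<beta>"
  shows "(\<lambda>k. Omega (n k) (h k) (l k) (I k) (j k) / real (h k)) \<longlonglongrightarrow>
        (1 + \<alpha>) * (1 - exp (- \<alpha> * \<beta>)) + \<alpha> * \<beta> * exp (- \<alpha> * \<beta>)"
proof -
  define x where "x = (\<lambda>k. real (l k) / real (h k))"
  define b where "b = (\<lambda>k. real (card (I k)) / real (n k))"
  define pi where "pi = (\<lambda>k. real (l k) / (real (n k - 1) * real (h k)))"
  define s where "s = (\<lambda>k. card (I k))"
  define q where "q = (\<lambda>k. (1 - pi k) ^ s k)"
  define y where "y = (\<lambda>k. real (s k) * pi k)"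
  have nm: "real (n k - 1) = real (n k) - 1" "real (n k) \<ge> 2" "real (h k) \<ge> 1" for k
    using H[rule_format, of k] by (auto simp: of_nat_diff)
  have om: "Omega (n k) (h k) (l k) (I k) (j k) / real (h k) = (1 + x k) * (1 - q k) + y k * q k" for k
  proof -
    have "Omega (n k) (h k) (l k) (I k) (j k) = real (h k + l k) * (1 - q k) + real (s k) * real (h k) * pi k * q k"
      using omega_formula[of "n k" "h k" "l k" "I k" "j k"] H[rule_format, of k]
      by (simp add: q_def pi_def s_def)
    thus ?thesis using nm(3)[of k] by (simp add: x_def y_def field_simps)
  qed
  have nm1: "filterlim (\<lambda>k. real (n k - 1)) at_top sequentially"
  proof -
    have "filterlim (\<lambda>k. real (n k)) at_top sequentially"
      by (rule filterlim_compose[OF filterlim_real_sequentially nlim])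
    hence "filterlim (\<lambda>k. -1 + real (n k)) at_top sequentially"
      by (intro filterlim_tendsto_add_at_top[OF tendsto_const])
    moreover have "(\<lambda>k. real (n k - 1)) = (\<lambda>k. -1 + real (n k))" using nm(1) by (auto simp: fun_eq_iff)
    ultimately show ?thesis by simp
  qed
  have piq: "pi k = x k / real (n k - 1)" for k by (simp add: pi_def x_def)
  have pi0: "pi \<longlonglongrightarrow> 0"
    unfolding piq using tendsto_divide_0[OF xl[folded x_def] filterlim_at_top_imp_at_infinity[OF nm1]] .
  have pinn: "pi k \<ge> 0" for k by (simp add: pi_def)
  have yq: "y k = b k * (1 + 1 / real (n k - 1)) * x k" for k
  proof -
    have "real (n k - 1) > 0" "real (n k) > 0" using nm[of k] by auto
    thus ?thesis unfolding y_def b_def x_def pi_def s_def using nm(1)[of k] nm(3)[of k]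
      by (simp add: field_simps)
  qed
  have yl: "y \<longlonglongrightarrow> \<beta> * (1 + 0) * \<alpha>"
    unfolding yq
    by (intro tendsto_mult tendsto_add tendsto_const bl[folded b_def] xl[folded x_def]
          tendsto_divide_0[OF tendsto_const filterlim_at_top_imp_at_infinity[OF nm1]])
  have ev: "eventually (\<lambda>k. pi k < 1/2) sequentially"
    using order_tendstoD(2)[OF pi0, of "1/2"] by simp
  define L where "L = (\<lambda>k. real (s k) * ln (1 - pi k))"
  have Ll: "L \<longlonglongrightarrow> - (\<beta> * \<alpha>)"
  proof (rule tendsto_sandwich[of "\<lambda>k. - y k - 2 * y k * pi k" _ _ "\<lambda>k. - y k"])
    show "eventually (\<lambda>k. - y k - 2 * y k * pi k \<le> L k) sequentially"
      using ev
    proof eventually_elim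
      case (elim k)
      have "- pi k - 2 * (pi k)\<^sup>2 \<le> ln (1 - pi k)"
        using elim pinn[of k] by (intro ln_one_minus_pos_lower_bound) auto
      hence "real (s k) * (- pi k - 2 * (pi k)\<^sup>2) \<le> real (s k) * ln (1 - pi k)"
        by (intro mult_left_mono) auto
      thus ?case by (simp add: L_def y_def power2_eq_square algebra_simps)
    qed
    show "eventually (\<lambda>k. L k \<le> - y k) sequentially"
      using ev
    proof eventually_elim
      case (elim k)
      have "ln (1 - pi k) \<le> (1 - pi k) - 1"
        using elim by (intro ln_le_minus_one) auto
      hence "real (s k) * ln (1 - pi k) \<le> real (s k) * ((1 - pi k) - 1)"
        by (intro mult_left_mono) auto
      thus ?case by (simp add: L_def y_def)
    qed
    have "(\<lambda>k. - y k - 2 * y k * pi k) \<longlonglongrightarrow> - (\<beta> * (1 + 0) * \<alpha>) - 2 * (\<beta> * (1 + 0) * \<alpha>) * 0"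
      by (intro tendsto_intros yl pi0)
    thus "(\<lambda>k. - y k - 2 * y k * pi k) \<longlonglongrightarrow> - (\<beta> * \<alpha>)" by simp
    show "(\<lambda>k. - y k) \<longlonglongrightarrow> - (\<beta> * \<alpha>)" using tendsto_minus[OF yl] by simp
  qed
  have ql: "q \<longlonglongrightarrow> exp (- (\<beta> * \<alpha>))"
  proof -
    have t: "(\<lambda>k. exp (L k)) \<longlonglongrightarrow> exp (- (\<beta> * \<alpha>))" by (intro tendsto_exp Ll)
    have e2: "eventually (\<lambda>k. exp (L k) = q k) sequentially"
      using ev
    proof eventually_elim
      case (elim k)
      have "exp (L k) = exp (ln (1 - pi k)) ^ s k" by (simp add: L_def exp_of_nat_mult)
      also have "\<dots> = q k" using elim by (simp add: q_def)
      finally show ?case .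
    qed
    show ?thesis using t tendsto_cong[OF e2] by simp
  qed
  have "(\<lambda>k. (1 + x k) * (1 - q k) + y k * q k) \<longlonglongrightarrow>
       (1 + \<alpha>) * (1 - exp (- (\<beta> * \<alpha>))) + (\<beta> * (1 + 0) * \<alpha>) * exp (- (\<beta> * \<alpha>))"
    by (intro tendsto_intros xl[folded x_def] ql yl)
  moreover have "(1 + \<alpha>) * (1 - exp (- (\<beta> * \<alpha>))) + (\<beta> * (1 + 0) * \<alpha>) * exp (- (\<beta> * \<alpha>))
     = (1 + \<alpha>) * (1 - exp (- \<alpha> * \<beta>)) + \<alpha> * \<beta> * exp (- \<alpha> * \<beta>)"
    by (simp add: mult.commute)
  ultimately show ?thesis unfolding om by simp
qed

theorem theorem7:
  shows
  "(\<forall>(n::nat) (h::nat) (l::nat) (I::nat set) (j::nat).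
      n \<ge> 2 \<longrightarrow> h \<ge> 1 \<longrightarrow> l \<le> (n - 1) * h \<longrightarrow>
      I \<subseteq> {1..n} \<longrightarrow> j \<in> {1..n} - I \<longrightarrow>
      (let g = real (h + l); \<pi> = real l / (real (n - 1) * real h); \<pi>' = 1 - \<pi>;
           s = card I
       in Omega n h l I j = g * (1 - \<pi>' ^ s) + real s * real h * \<pi> * \<pi>' ^ s))
   \<and>
   (\<forall>(n::nat \<Rightarrow> nat) (h::nat \<Rightarrow> nat) (l::nat \<Rightarrow> nat) (I::nat \<Rightarrow> nat set)
      (j::nat \<Rightarrow> nat) (\<alpha>::real) (\<beta>::real).
      (\<forall>k. n k \<ge> 2 \<and> h k \<ge> 1 \<and> l k \<le> (n k - 1) * h k \<and>
           I k \<subseteq> {1..n k} \<and> j k \<in> {1..n k} - I k) \<longrightarrow>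
      filterlim n at_top sequentially \<longrightarrow>
      (\<lambda>k. real (l k) / real (h k)) \<longlonglongrightarrow> \<alpha> \<longrightarrow>
      (\<lambda>k. real (card (I k)) / real (n k)) \<longlonglongrightarrow> \<beta> \<longrightarrow>
      (\<lambda>k. Omega (n k) (h k) (l k) (I k) (j k) / real (h k)) \<longlonglongrightarrow>
        (1 + \<alpha>) * (1 - exp (- \<alpha> * \<beta>)) + \<alpha> * \<beta> * exp (- \<alpha> * \<beta>))"
  proof (intro conjI allI impI)
  fix n h l :: nat and I :: "nat set" and j :: nat
  assume "n \<ge> 2" "h \<ge> 1" "l \<le> (n - 1) * h" "I \<subseteq> {1..n}" "j \<in> {1..n} - I"
  thus "let g = real (h + l); \<pi> = real l / (real (n - 1) * real h); \<pi>' = 1 - \<pi>; s = card I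
       in Omega n h l I j = g * (1 - \<pi>' ^ s) + real s * real h * \<pi> * \<pi>' ^ s"
    unfolding Let_def by (rule omega_formula)
next
  fix n h l :: "nat \<Rightarrow> nat" and I :: "nat \<Rightarrow> nat set" and j :: "nat \<Rightarrow> nat" and \<alpha> \<beta> :: real
  assume "\<forall>k. n k \<ge> 2 \<and> h k \<ge> 1 \<and> l k \<le> (n k - 1) * h k \<and>
           I k \<subseteq> {1..n k} \<and> j k \<in> {1..n k} - I k"
    "filterlim n at_top sequentially"
    "(\<lambda>k. real (l k) / real (h k)) \<longlonglongrightarrow> \<alpha>"
    "(\<lambda>k. real (card (I k)) / real (n k)) \<longlonglongrightarrow> \<beta>"
  thus "(\<lambda>k. Omega (n k) (h k) (l k) (I k) (j k) / real (h k)) \<longlonglongrightarrow>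
        (1 + \<alpha>) * (1 - exp (- \<alpha> * \<beta>)) + \<alpha> * \<beta> * exp (- \<alpha> * \<beta>)"
    by (rule limit_part)
qed

end
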